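(* Let $\alpha>0$ and consider the nonlinear program described in the context. Let $x^*\in X_{KKT}$ with associated Lagrange multipliers $(u^*,v^* )$, and suppose LICQ holds at $x^*$ and $(x^*,u^*,v^* )$ satisfies the strict complementarity condition and the second-order sufficient condition. Then $\mathcal{G}_\alpha$ is differentiable at $x^*$ and $\frac{\partial\mathcal{G}_\alpha}{\partial x}(x^* )=-PQ-\alpha(I-P)$, where $I$ is the $n\times n$ identity, $P$ is the orthogonal projection matrix onto $\ker\frac{\partial g_{I_0}}{\partial x}(x^* )\cap\ker\frac{\partial h}{\partial x}(x^* )$, and $Q=\nabla^2f(x^* )+\sum_{i=1}^m u_i^*\nabla^2g_i(x^* )+\sum_{j=1}^k v_j^*\nabla^2h_j(x^* )$.
   Context: Let $f:\mathbb{R}^n\to\mathbb{R}$, $g:\mathbb{R}^n\to\mathbb{R}^m$, $h:\mathbb{R}^n\to\mathbb{R}^k$ be twice continuously differentiable; program: minimize $f(x)$ subject to $g(x)\le0$, $h(x)=0$. $I_0(x)=\{i:g_i(x)=0\}$ and $\frac{\partial g_{I_0}}{\partial x}(x)$ is the matrix with rows $\nabla g_i(x)^\top$, $i\in I_0(x)$. LICQ at $x$: $\{\nabla g_i(x)\}_{i\in I_0(x)}\cup\{\nabla h_j(x)\}_{j=1}^k$ linearly independent. $(x^*,u^*,v^* )$ is a KKT triple if $\nabla f(x^* )+\frac{\partial g}{\partial x}(x^* )^\top u^*+\frac{\partial h}{\partial x}(x^* )^\top v^*=0$, $g(x^* )\le0$, $h(x^* )=0$, $u^*\ge0$, $(u^*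 )^\top g(x^* )=0$; $X_{KKT}$ is the set of such $x^*$. Strict complementarity: $u_i^*>0$ for all $i\in I_0(x^* )$. Second-order sufficient condition: $z^\top Qz>0$ for all nonzero $z\in\ker\frac{\partial g_{I_0}}{\partial x}(x^* )\cap\ker\frac{\partial h}{\partial x}(x^* )$, with $Q$ as in the claim. $\mathcal{G}_\alpha(x)$ is the unique minimizer over $\xi$ of $\frac12\|\xi+\nabla f(x)\|^2$ subject to $\frac{\partial g}{\partial x}(x)\xi\le-\alpha g(x)$, $\frac{\partial h}{\partial x}(x)\xi=-\alpha h(x)$. *)

theory Defs
  imports "HOL-Analysis.Analysis"
begin

text \<open>Vectors in R^n are rendered as real^'n. Constraint functions are indexed by
  natural numbers: g i for i < m, h j for j < k (so m = 0 or k = 0 is allowed).\<close>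

definition grad :: "(real^'n \<Rightarrow> real) \<Rightarrow> real^'n \<Rightarrow> real^'n" where
  "grad F x = (THE v. (F has_derivative (\<lambda>d. v \<bullet> d)) (at x))"

definition hess :: "(real^'n \<Rightarrow> real) \<Rightarrow> real^'n \<Rightarrow> real^'n^'n" where
  "hess F x = (THE M. (grad F has_derivative (\<lambda>d. M *v d)) (at x))"

definition twice_cont_diff :: "(real^'n \<Rightarrow> real) \<Rightarrow> bool" where
  "twice_cont_diff F \<longleftrightarrow>
     (\<exists>Df D2f. (\<forall>x. (F has_derivative (\<lambda>d. Df x \<bullet> d)) (at x)) \<and>
               (\<forall>x. (Df has_derivative (\<lambda>d. D2f x *v d)) (at x)) \<and>
               continuous_on UNIV D2f)"

definition active :: "(nat \<Rightarrow> real^'n \<Rightarrow> real) \<Rightarrow> nat \<Rightarrow> real^'n \<Rightarrow> nat set" where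
  "active g m x = {i. i < m \<and> g i x = 0}"

definition LICQ :: "(nat \<Rightarrow> real^'n \<Rightarrow> real) \<Rightarrow> nat \<Rightarrow> (nat \<Rightarrow> real^'n \<Rightarrow> real) \<Rightarrow> nat
                    \<Rightarrow> real^'n \<Rightarrow> bool" where
  "LICQ g m h k x \<longleftrightarrow>
     (\<forall>a b. (\<Sum>i\<in>active g m x. a i *\<^sub>R grad (g i) x) + (\<Sum>j<k. b j *\<^sub>R grad (h j) x) = 0
        \<longrightarrow> (\<forall>i\<in>active g m x. a i = 0) \<and> (\<forall>j<k. b j = 0))"

definition KKT_triple :: "(real^'n \<Rightarrow> real) \<Rightarrow> (nat \<Rightarrow> real^'n \<Rightarrow> real) \<Rightarrow> nat
     \<Rightarrow> (nat \<Rightarrow> real^'n \<Rightarrow> real) \<Rightarrow> nat \<Rightarrow> real^'n \<Rightarrow> (nat \<Rightarrow> real) \<Rightarrow> (nat \<Rightarrow> real) \<Rightarrow> bool" where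
  "KKT_triple f g m h k x u v \<longleftrightarrow>
     grad f x + (\<Sum>i<m. u i *\<^sub>R grad (g i) x) + (\<Sum>j<k. v j *\<^sub>R grad (h j) x) = 0 \<and>
     (\<forall>i<m. g i x \<le> 0) \<and> (\<forall>j<k. h j x = 0) \<and> (\<forall>i<m. u i \<ge> 0) \<and>
     (\<Sum>i<m. u i * g i x) = 0"

definition crit_space :: "(nat \<Rightarrow> real^'n \<Rightarrow> real) \<Rightarrow> nat \<Rightarrow> (nat \<Rightarrow> real^'n \<Rightarrow> real) \<Rightarrow> nat
     \<Rightarrow> real^'n \<Rightarrow> (real^'n) set" where
  "crit_space g m h k x =
     {z. (\<forall>i\<in>active g m x. grad (g i) x \<bullet> z = 0) \<and> (\<forall>j<k. grad (h j) x \<bullet> z = 0)}"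

definition is_orth_proj_matrix :: "real^'n^'n \<Rightarrow> (real^'n) set \<Rightarrow> bool" where
  "is_orth_proj_matrix P K \<longleftrightarrow>
     (\<forall>x. P *v x \<in> K \<and> (\<forall>y\<in>K. (x - P *v x) \<bullet> y = 0))"

definition dir_feasible :: "real \<Rightarrow> (nat \<Rightarrow> real^'n \<Rightarrow> real) \<Rightarrow> nat
     \<Rightarrow> (nat \<Rightarrow> real^'n \<Rightarrow> real) \<Rightarrow> nat \<Rightarrow> real^'n \<Rightarrow> (real^'n) set" where
  "dir_feasible \<alpha> g m h k x =
     {\<xi>. (\<forall>i<m. grad (g i) x \<bullet> \<xi> \<le> - \<alpha> * g i x) \<and> (\<forall>j<k. grad (h j) x \<bullet> \<xi> = - \<alpha> * h j x)}"

definition G_alpha :: "real \<Rightarrow> (real^'n \<Rightarrow> real) \<Rightarrow> (nat \<Rightarrow> real^'n \<Rightarrow> real) \<Rightarrow> nat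
     \<Rightarrow> (nat \<Rightarrow> real^'n \<Rightarrow> real) \<Rightarrow> nat \<Rightarrow> real^'n \<Rightarrow> real^'n" where
  "G_alpha \<alpha> f g m h k x =
     (THE \<xi>. \<xi> \<in> dir_feasible \<alpha> g m h k x \<and>
        (\<forall>\<eta>\<in>dir_feasible \<alpha> g m h k x.
           (1/2) * (norm (\<xi> + grad f x))\<^sup>2 \<le> (1/2) * (norm (\<eta> + grad f x))\<^sup>2))"

end

theory Submission
  imports Defs
begin

lemma ev_nhds: "eventually P (at x) \<Longrightarrow> P x \<Longrightarrow> eventually P (nhds x)"
  unfolding eventually_at_filter by (auto elim: eventually_mono)

lemma bil_deriv_zero:
  fixes u :: "'a::real_normed_vector \<Rightarrow> 'b::real_normed_vector"
    and v :: "'a \<Rightarrow> 'c::real_normed_vector"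
    and prod :: "'b \<Rightarrow> 'c \<Rightarrow> 'd::real_normed_vector"
  assumes bb: "bounded_bilinear prod" and u: "(u \<longlongrightarrow> u0) (at x0)"
    and v: "(v has_derivative v') (at x0)" and v0: "v x0 = 0"
  shows "((\<lambda>x. prod (u x) (v x)) has_derivative (\<lambda>d. prod u0 (v' d))) (at x0)"
proof -
  interpret bb: bounded_bilinear prod by (rule bb)
  from v have blv: "bounded_linear v'"
    and N: "((\<lambda>y. norm (v y - v x0 - v' (y - x0)) / norm (y - x0)) \<longlongrightarrow> 0) (at x0)"
    by (auto simp: has_derivative_iff_norm)
  obtain K where K: "K > 0" "\<And>a b. norm (prod a b) \<le> norm a * norm b * K"
    using bb.pos_bounded by blast
  obtain B where B: "B > 0" "\<And>h. norm (v' h) \<le> norm h * B"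
    using bounded_linear.pos_bounded[OF blv] by blast
  let ?N = "\<lambda>y. norm (v y - v x0 - v' (y - x0)) / norm (y - x0)"
  have bl: "bounded_linear (\<lambda>d. prod u0 (v' d))"
    using bounded_linear_compose[OF bb.bounded_linear_right blv] by simp
  have lim: "((\<lambda>y. K * norm u0 * ?N y + K * norm (u y - u0) * (?N y + B)) \<longlongrightarrow> 0) (at x0)"
  proof -
    have "((\<lambda>y. u y - u0) \<longlongrightarrow> 0) (at x0)" using u by (simp add: LIM_zero)
    then have "((\<lambda>y. norm (u y - u0)) \<longlongrightarrow> 0) (at x0)" by (simp add: tendsto_norm_zero)
    then have "((\<lambda>y. K * norm u0 * ?N y + K * norm (u y - u0) * (?N y + B)) \<longlongrightarrow>
        K * norm u0 * 0 + K * 0 * (0 + B)) (at x0)"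
      by (intro tendsto_intros N)
    then show ?thesis by simp
  qed
  have ev: "\<forall>\<^sub>F y in at x0. norm (norm (prod (u y) (v y) - prod (u x0) (v x0) - prod u0 (v' (y - x0))) / norm (y - x0))
      \<le> K * norm u0 * ?N y + K * norm (u y - u0) * (?N y + B)"
  proof -
  have "\<forall>\<^sub>F y in at x0. y \<noteq> x0" by (simp add: eventually_at_filter)
  then show ?thesis
  proof (rule eventually_mono)
    fix y assume "y \<noteq> x0"
    then have ny: "norm (y - x0) > 0" by simp
    let ?e = "v y - v x0 - v' (y - x0)"
    have eq: "prod (u y) (v y) - prod (u x0) (v x0) - prod u0 (v' (y - x0))
        = prod u0 ?e + prod (u y - u0) (v y)"
      using v0 by (simp add: bb.diff_left bb.diff_right bb.zero_right algebra_simps)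
    have vy: "norm (v y) \<le> norm ?e + B * norm (y - x0)"
    proof -
      have "v y = ?e + v' (y - x0)" using v0 by simp
      then have "norm (v y) \<le> norm ?e + norm (v' (y - x0))" by (metis norm_triangle_ineq)
      then show ?thesis using B(2)[of "y - x0"] by (simp add: mult.commute)
    qed
    have "norm (prod u0 ?e + prod (u y - u0) (v y)) \<le> norm u0 * norm ?e * K + norm (u y - u0) * norm (v y) * K"
      by (rule order_trans[OF norm_triangle_ineq add_mono[OF K(2) K(2)]])
    also have "\<dots> \<le> norm u0 * norm ?e * K + norm (u y - u0) * (norm ?e + B * norm (y - x0)) * K"
      using vy K(1) by (intro add_mono mult_right_mono mult_left_mono) auto
    finally have le: "norm (prod u0 ?e + prod (u y - u0) (v y)) \<le>
       norm u0 * norm ?e * K + norm (u y - u0) * (norm ?e + B * norm (y - x0)) * K" .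
    have "norm (prod u0 ?e + prod (u y - u0) (v y)) / norm (y - x0) \<le>
       (norm u0 * norm ?e * K + norm (u y - u0) * (norm ?e + B * norm (y - x0)) * K) / norm (y - x0)"
      using le ny by (simp add: divide_right_mono)
    also have "\<dots> = K * norm u0 * ?N y + K * norm (u y - u0) * (?N y + B)"
      using ny by (simp add: field_simps)
    finally have F: "norm (prod u0 ?e + prod (u y - u0) (v y)) / norm (y - x0) \<le> K * norm u0 * ?N y + K * norm (u y - u0) * (?N y + B)" .
    have "norm (norm (prod (u y) (v y) - prod (u x0) (v x0) - prod u0 (v' (y - x0))) / norm (y - x0))
       = norm (prod u0 ?e + prod (u y - u0) (v y)) / norm (y - x0)" unfolding eq by simp
    with F show "norm (norm (prod (u y) (v y) - prod (u x0) (v x0) - prod u0 (v' (y - x0))) / norm (y - x0))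
      \<le> K * norm u0 * ?N y + K * norm (u y - u0) * (?N y + B)" by (metis (no_types, lifting))
  qed
  qed
  show ?thesis unfolding has_derivative_iff_norm
    using bl Lim_null_comparison[OF ev lim] by simp
qed

lemma basis_bound:
  fixes L :: "'a::euclidean_space \<Rightarrow> 'b::real_normed_vector"
  assumes "linear L"
  shows "norm (L z) \<le> (\<Sum>b\<in>Basis. norm (L b)) * norm z"
proof -
  have "L z = L (\<Sum>b\<in>Basis. (z \<bullet> b) *\<^sub>R b)" by (simp add: euclidean_representation)
  also have "\<dots> = (\<Sum>b\<in>Basis. (z \<bullet> b) *\<^sub>R L b)"
    using assms by (simp add: linear_sum linear_scale)
  finally have "norm (L z) \<le> (\<Sum>b\<in>Basis. norm ((z \<bullet> b) *\<^sub>R L b))"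
    by (metis norm_sum)
  also have "\<dots> \<le> (\<Sum>b\<in>Basis. norm z * norm (L b))"
    by (intro sum_mono) (simp add: Basis_le_norm mult_right_mono)
  finally show ?thesis by (simp add: sum_distrib_left mult.commute)
qed

lemma inj_below:
  fixes f :: "'a::euclidean_space \<Rightarrow> 'a"
  assumes "linear f" "inj f"
  obtains c where "c > 0" "\<And>z. c * norm z \<le> norm (f z)"
proof -
  obtain g where g: "linear g" "g \<circ> f = id" using linear_injective_left_inverse[OF assms] by blast
  obtain B where B: "B > 0" "\<And>x. norm (g x) \<le> B * norm x" using linear_bounded_pos[OF g(1)] by blast
  have "(1/B) * norm z \<le> norm (f z)" for z
  proof -
    have "norm z = norm (g (f z))" using g(2) by (metis comp_apply id_apply)
    also have "\<dots> \<le> B * norm (f z)" by (rule B(2))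
    finally show ?thesis using B(1) by (simp add: field_simps)
  qed
  then show ?thesis using that[of "1/B"] B(1) by simp
qed


locale core =
  fixes J :: "'j set" and a :: "'j \<Rightarrow> real^'n \<Rightarrow> real^'n" and c :: "'j \<Rightarrow> real^'n \<Rightarrow> real"
    and df :: "real^'n \<Rightarrow> real^'n" and x0 :: "real^'n" and w0 :: "'j \<Rightarrow> real"
    and P :: "real^'n^'n" and H :: "'j \<Rightarrow> real^'n^'n" and Hf :: "real^'n^'n" and \<alpha> :: real
  assumes finJ: "finite J"
    and c_der: "\<And>l. l \<in> J \<Longrightarrow> (c l has_derivative (\<lambda>d. a l x0 \<bullet> d)) (at x0)"
    and c0: "\<And>l. l \<in> J \<Longrightarrow> c l x0 = 0"
    and a_der: "\<And>l. l \<in> J \<Longrightarrow> (a l has_derivative (\<lambda>d. H l *v d)) (at x0)"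
    and df_der: "(df has_derivative (\<lambda>d. Hf *v d)) (at x0)"
    and indep: "\<And>t l. (\<Sum>l\<in>J. t l *\<^sub>R a l x0) = 0 \<Longrightarrow> l \<in> J \<Longrightarrow> t l = 0"
    and kkt: "df x0 + (\<Sum>l\<in>J. w0 l *\<^sub>R a l x0) = 0"
    and proj: "is_orth_proj_matrix P {z. \<forall>l\<in>J. a l x0 \<bullet> z = 0}"
begin

definition "KK = {z. \<forall>l\<in>J. a l x0 \<bullet> z = 0}"
definition "Y x z = (\<Sum>l\<in>J. (a l x0 \<bullet> z) *\<^sub>R a l x)"
definition "Psi x z = (\<Sum>l\<in>J. (a l x \<bullet> Y x z) *\<^sub>R a l x0) + P *v z"
definition "beta l x = \<alpha> * c l x - a l x \<bullet> df x"
definition "r x = (\<Sum>l\<in>J. beta l x *\<^sub>R a l x0)"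
definition "T z = (\<Sum>l\<in>J. (a l x0 \<bullet> z) *\<^sub>R a l x0)"
definition "zz x = (SOME z. Psi x z = r x)"
definition "w l x = a l x0 \<bullet> zz x"
definition "xi x = - df x - (\<Sum>l\<in>J. w l x *\<^sub>R a l x)"

lemma PK: "P *v z \<in> KK" and Porth: "y \<in> KK \<Longrightarrow> (z - P *v z) \<bullet> y = 0"
  using proj unfolding is_orth_proj_matrix_def KK_def by auto

lemma aP: "l \<in> J \<Longrightarrow> a l x0 \<bullet> (P *v z) = 0"
  using PK[of z] unfolding KK_def by auto

lemma P_fix: assumes "z \<in> KK" shows "P *v z = z"
proof -
  have "z - P *v z \<in> KK" using assms PK[of z] unfolding KK_def by (auto simp: inner_diff_right)
  then have "(z - P *v z) \<bullet> (z - P *v z) = 0" by (rule Porth)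
  then show ?thesis by simp
qed

lemma PP: "P *v (P *v z) = P *v z"
  using P_fix[OF PK] .

lemma Pa: assumes "l \<in> J" shows "P *v a l x0 = 0"
proof -
  have "(a l x0 - P *v a l x0) \<bullet> (P *v a l x0) = 0" by (rule Porth[OF PK])
  moreover have "a l x0 \<bullet> (P *v a l x0) = 0" using aP[OF assms] .
  ultimately have "(P *v a l x0) \<bullet> (P *v a l x0) = 0" by (simp add: inner_diff_left)
  then show ?thesis by simp
qed

lemma sepa:
  assumes "(\<Sum>l\<in>J. s l *\<^sub>R a l x0) + P *v z = 0"
  shows "P *v z = 0" "\<And>l. l \<in> J \<Longrightarrow> s l = 0"
proof -
  let ?E = "\<Sum>l\<in>J. s l *\<^sub>R a l x0"
  have E0: "?E \<bullet> (P *v z) = 0"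
    by (simp add: inner_sum_left aP)
  have "P *v z = - ?E" using assms by (simp add: eq_neg_iff_add_eq_0 add.commute)
  then have "(P *v z) \<bullet> (P *v z) = 0" using E0 by (metis inner_minus_left neg_equal_0_iff_equal)
  then show Pz: "P *v z = 0" by simp
  with assms have "?E = 0" by simp
  then show "\<And>l. l \<in> J \<Longrightarrow> s l = 0" using indep by blast
qed

lemma linear_Y: "linear (Y x)"
  by (rule linearI) (simp_all add: Y_def inner_add_right scaleR_add_left sum.distrib scaleR_sum_right)

lemma linear_Psi: "linear (Psi x)"
proof (rule linearI)
  fix z1 z2 show "Psi x (z1 + z2) = Psi x z1 + Psi x z2"
    using linear_add[OF linear_Y]
    by (simp add: Psi_def inner_add_right scaleR_add_left sum.distrib matrix_vector_right_distrib algebra_simps)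
next
  fix s z show "Psi x (s *\<^sub>R z) = s *\<^sub>R Psi x z"
    using linear_scale[OF linear_Y]
    by (simp add: Psi_def scaleR_sum_right matrix_scaleR_vector_ac scaleR_matrix_vector_assoc[symmetric] scaleR_add_right)
qed

lemma linear_T: "linear T"
  by (rule linearI) (simp_all add: T_def inner_add_right scaleR_add_left sum.distrib scaleR_sum_right)

lemma solve:
  assumes "Psi x z = r x" "l \<in> J"
  shows "a l x \<bullet> Y x z = beta l x"
proof -
  have "(\<Sum>l\<in>J. (a l x \<bullet> Y x z - beta l x) *\<^sub>R a l x0) + P *v z = Psi x z - r x"
    by (simp add: Psi_def r_def scaleR_diff_left sum_subtractf)
  also have "\<dots> = 0" using assms(1) by simp
  finally show ?thesis using sepa(2)[of "\<lambda>l. a l x \<bullet> Y x z - beta l x", OF _ assms(2)] by simp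
qed

lemma inj_Psi0: "inj (Psi x0)"
proof -
  have "z = 0" if z: "Psi x0 z = 0" for z
  proof -
    have s: "(\<Sum>l\<in>J. (a l x0 \<bullet> Y x0 z) *\<^sub>R a l x0) + P *v z = 0" using z by (simp add: Psi_def)
    note Pz = sepa(1)[OF s] and al = sepa(2)[OF s]
    have "Y x0 z \<bullet> Y x0 z = (\<Sum>l\<in>J. (a l x0 \<bullet> z) * (a l x0 \<bullet> Y x0 z))"
      by (simp add: Y_def inner_sum_left)
    also have "\<dots> = 0" using al by simp
    finally have Y0: "Y x0 z = 0" by simp
    have "z \<bullet> Y x0 z = (\<Sum>l\<in>J. (a l x0 \<bullet> z)\<^sup>2)"
      by (simp add: Y_def inner_sum_right power2_eq_square inner_commute)
    then have "(\<Sum>l\<in>J. (a l x0 \<bullet> z)\<^sup>2) = 0" using Y0 by simp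
    then have "\<forall>l\<in>J. (a l x0 \<bullet> z)\<^sup>2 = 0" using finJ by (simp add: sum_nonneg_eq_0_iff)
    then have "z \<in> KK" by (simp add: KK_def)
    then show "z = 0" using P_fix Pz by simp
  qed
  then show ?thesis using linear_Psi[of x0] by (simp add: linear_inj_iff_eq_0)
qed

end

context core begin

lemma cont_of_der: "(f has_derivative f') (at x0) \<Longrightarrow> (f \<longlongrightarrow> f x0) (at x0)"
  using has_derivative_continuous continuous_at by blast

lemma a_cont: "l \<in> J \<Longrightarrow> (a l \<longlongrightarrow> a l x0) (at x0)"
  using cont_of_der[OF a_der] .
lemma c_cont: "l \<in> J \<Longrightarrow> (c l \<longlongrightarrow> c l x0) (at x0)"
  using cont_of_der[OF c_der] .
lemma df_cont: "(df \<longlongrightarrow> df x0) (at x0)"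
  using cont_of_der[OF df_der] .

definition "eps x = (\<Sum>b\<in>Basis. norm (Psi x b - Psi x0 b))"

lemma Psi_lim: "((\<lambda>x. Psi x b) \<longlongrightarrow> Psi x0 b) (at x0)"
  unfolding Psi_def Y_def by (auto intro!: tendsto_intros a_cont)

lemma eps_lim: "(eps \<longlongrightarrow> 0) (at x0)"
proof -
  have "(eps \<longlongrightarrow> (\<Sum>b\<in>(Basis::(real^'n) set). norm (Psi x0 b - Psi x0 b))) (at x0)"
    unfolding eps_def by (intro tendsto_intros Psi_lim)
  then show ?thesis by simp
qed

lemma eps0: "eps x0 = 0" by (simp add: eps_def)

lemma Psi_bound: "norm (Psi x z - Psi x0 z) \<le> eps x * norm z"
  unfolding eps_def
  by (rule basis_bound[of "\<lambda>z. Psi x z - Psi x0 z"]) (intro module_hom_sub linear_Psi)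

definition "cc = (SOME c. c > 0 \<and> (\<forall>z. c * norm z \<le> norm (Psi x0 z)))"

lemma cc: "cc > 0" "cc * norm z \<le> norm (Psi x0 z)"
proof -
  obtain c where "c > 0" "\<And>z. c * norm z \<le> norm (Psi x0 z)"
    using inj_below[OF linear_Psi inj_Psi0] by blast
  then have "\<exists>c. c > 0 \<and> (\<forall>z. c * norm z \<le> norm (Psi x0 z))" by blast
  from someI_ex[OF this] show "cc > 0" "cc * norm z \<le> norm (Psi x0 z)" unfolding cc_def by auto
qed

lemma good_solve: assumes "eps x < cc" shows "Psi x (zz x) = r x"
proof -
  have "z = 0" if z: "Psi x z = 0" for z
  proof -
    have "cc * norm z \<le> norm (Psi x0 z)" by (rule cc)
    also have "\<dots> = norm (Psi x z - Psi x0 z)" using z by (simp add: norm_minus_commute)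
    also have "\<dots> \<le> eps x * norm z" by (rule Psi_bound)
    finally have "(cc - eps x) * norm z \<le> 0" by (simp add: algebra_simps)
    then have "norm z \<le> 0" using assms by (simp add: mult_le_0_iff)
    then show ?thesis by simp
  qed
  then have "inj (Psi x)" using linear_Psi[of x] by (simp add: linear_inj_iff_eq_0)
  then have "surj (Psi x)" using eucl.linear_injective_imp_surjective[OF linear_Psi] by blast
  then have "\<exists>z. Psi x z = r x" by (metis surjD)
  from someI_ex[OF this] show ?thesis unfolding zz_def .
qed

lemma zz0: "Psi x0 (zz x0) = r x0"
  using good_solve cc eps0 by simp

lemma r_lim: "(r \<longlongrightarrow> r x0) (at x0)"
  unfolding r_def beta_def by (auto intro!: tendsto_intros a_cont c_cont df_cont)

lemma ev_good: "\<forall>\<^sub>F x in at x0. eps x < cc / 2"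
proof -
  have "0 < cc / 2" using cc(1) by simp
  from order_tendstoD(2)[OF eps_lim this] show ?thesis .
qed

lemma zz_lim: "(zz \<longlongrightarrow> zz x0) (at x0)"
proof -
  let ?zo = "zz x0"
  let ?g = "\<lambda>x. (2 / cc) * (eps x * norm ?zo + norm (r x - r x0))"
  have glim: "(?g \<longlongrightarrow> 0) (at x0)"
  proof -
    have "((\<lambda>x. r x - r x0) \<longlongrightarrow> 0) (at x0)" using r_lim by (simp add: LIM_zero)
    then have "((\<lambda>x. norm (r x - r x0)) \<longlongrightarrow> 0) (at x0)" by (simp add: tendsto_norm_zero)
    then have "(?g \<longlongrightarrow> (2/cc) * (0 * norm ?zo + 0)) (at x0)"
      by (intro tendsto_intros eps_lim)
    then show ?thesis by simp
  qed
  have "\<forall>\<^sub>F x in at x0. norm (zz x - ?zo) \<le> ?g x"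
  proof (rule eventually_mono[OF ev_good])
    fix x assume ex: "eps x < cc / 2"
    then have sx: "Psi x (zz x) = r x" using good_solve cc(1) by simp
    let ?z = "zz x"
    have c1: "cc * norm (?z - ?zo) \<le> norm (Psi x0 (?z - ?zo))" by (rule cc)
    have c2: "Psi x0 (?z - ?zo) = Psi x0 ?z - Psi x0 ?zo" by (rule linear_diff[OF linear_Psi])
    have e1: "Psi x0 ?zo = r x0" by (rule zz0)
    have c3: "Psi x0 (?z - ?zo) = (Psi x0 ?z - Psi x ?z) + (r x - r x0)"
      unfolding c2 e1 sx by simp
    have c4: "norm (Psi x0 ?z - Psi x ?z) \<le> eps x * norm ?z"
      using Psi_bound[of x ?z] by (simp add: norm_minus_commute)
    have c5: "norm ?z \<le> norm (?z - ?zo) + norm ?zo" by (metis norm_triangle_sub add.commute)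
    have epos: "eps x \<ge> 0" unfolding eps_def by (simp add: sum_nonneg)
    have "cc * norm (?z - ?zo) \<le> norm (Psi x0 ?z - Psi x ?z) + norm (r x - r x0)"
      using c1 c3 norm_triangle_ineq[of "Psi x0 ?z - Psi x ?z" "r x - r x0"] by simp
    also have "\<dots> \<le> eps x * (norm (?z - ?zo) + norm ?zo) + norm (r x - r x0)"
      using c4 c5 epos by (meson add_mono_thms_linordered_semiring(3) mult_left_mono order_trans)
    finally have "cc * norm (?z - ?zo) \<le> eps x * (norm (?z - ?zo) + norm ?zo) + norm (r x - r x0)"
      .
    then have "(cc - eps x) * norm (?z - ?zo) \<le> eps x * norm ?zo + norm (r x - r x0)"
      by (simp add: algebra_simps)
    moreover have "(cc/2) * norm (?z - ?zo) \<le> (cc - eps x) * norm (?z - ?zo)"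
      using ex by (intro mult_right_mono) auto
    ultimately have "(cc/2) * norm (?z - ?zo) \<le> eps x * norm ?zo + norm (r x - r x0)" by linarith
    then show "norm (?z - ?zo) \<le> ?g x" using cc(1) by (simp add: field_simps)
  qed
  from Lim_null_comparison[OF this glim] show ?thesis by (simp add: LIM_zero_iff)
qed

lemma w_lim: "(w l \<longlongrightarrow> w l x0) (at x0)"
  unfolding w_def by (intro tendsto_intros zz_lim)

lemma YZ: "Y x (zz x) = (\<Sum>l\<in>J. w l x *\<^sub>R a l x)"
  by (simp add: Y_def w_def)

lemma xiY: "xi x = - df x - Y x (zz x)"
  by (simp add: xi_def YZ)

lemma eq2_at: assumes "Psi x (zz x) = r x" "l \<in> J" shows "a l x \<bullet> xi x = - \<alpha> * c l x"
  using solve[OF assms] by (simp add: xiY beta_def inner_diff_right)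

lemma w0_xi0: "l \<in> J \<Longrightarrow> w l x0 = w0 l" and xi0: "xi x0 = 0"
proof -
  have ax: "a l x0 \<bullet> xi x0 = 0" if "l \<in> J" for l using eq2_at[OF zz0 that] c0[OF that] by simp
  have dfe: "df x0 = - (\<Sum>l\<in>J. w0 l *\<^sub>R a l x0)" using kkt by (simp add: eq_neg_iff_add_eq_0)
  have xe: "xi x0 = (\<Sum>l\<in>J. (w0 l - w l x0) *\<^sub>R a l x0)"
    by (simp add: xi_def dfe scaleR_diff_left sum_subtractf)
  have "xi x0 \<bullet> xi x0 = (\<Sum>l\<in>J. (w0 l - w l x0) * (a l x0 \<bullet> xi x0))"
    by (subst (1) xe) (simp add: inner_sum_left)
  also have "\<dots> = 0" using ax by simp
  finally show xz: "xi x0 = 0" by simp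
  assume "l \<in> J"
  then show "w l x0 = w0 l" using indep[of "\<lambda>l. w0 l - w l x0" l] xe xz by simp
qed

lemma xi_lim: "(xi \<longlongrightarrow> 0) (at x0)"
proof -
  have "(xi \<longlongrightarrow> - df x0 - (\<Sum>l\<in>J. w l x0 *\<^sub>R a l x0)) (at x0)"
    unfolding xi_def by (auto intro!: tendsto_intros df_cont w_lim a_cont)
  moreover have "- df x0 - (\<Sum>l\<in>J. w l x0 *\<^sub>R a l x0) = 0"
  proof -
    have "(\<Sum>l\<in>J. w l x0 *\<^sub>R a l x0) = (\<Sum>l\<in>J. w0 l *\<^sub>R a l x0)"
      by (rule sum.cong) (simp_all add: w0_xi0)
    moreover have "- df x0 - (\<Sum>l\<in>J. w0 l *\<^sub>R a l x0) = - (df x0 + (\<Sum>l\<in>J. w0 l *\<^sub>R a l x0))" by simp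
    ultimately show ?thesis using kkt by simp
  qed
  ultimately show ?thesis by simp
qed

lemma ev_solve: "\<forall>\<^sub>F x in nhds x0. Psi x (zz x) = r x"
  by (rule ev_nhds[where P="\<lambda>x. Psi x (zz x) = r x", OF eventually_mono[OF ev_good] zz0]) (use good_solve cc(1) in auto)

end

lemma der_ev:
  fixes f g :: "'a::real_normed_vector \<Rightarrow> 'b::real_normed_vector"
  assumes "(f has_derivative D) (at x)" "eventually (\<lambda>y. f y = g y) (nhds x)"
  shows "(g has_derivative D) (at x)"
proof -
  obtain d where d: "d > 0" "\<And>y. dist y x < d \<Longrightarrow> f y = g y"
    using assms(2) unfolding eventually_nhds_metric by blast
  show ?thesis
    by (rule has_derivative_transform_within[OF assms(1) d(1)]) (use d in auto)
qed

context core begin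

lemma linP: "linear ((*v) P)" by (rule matrix_vector_mul_linear)

lemma Pxi_eq: "P *v xi x = - (P *v df x) - (\<Sum>l\<in>J. w l x *\<^sub>R (P *v a l x))"
  unfolding xi_def
  by (simp add: linear_diff[OF linP] linear_neg[OF linP] linear_sum[OF linP] linear_scale[OF linP])

lemma w_lim0: "l \<in> J \<Longrightarrow> (w l \<longlongrightarrow> w0 l) (at x0)"
  using w_lim[of l] w0_xi0 by simp

lemma Pxi_der: "((\<lambda>x. P *v xi x) has_derivative
   (\<lambda>d. - (P *v (Hf *v d)) - (\<Sum>l\<in>J. w0 l *\<^sub>R (P *v (H l *v d))))) (at x0)"
proof -
  have t: "((\<lambda>x. w l x *\<^sub>R (P *v a l x)) has_derivative (\<lambda>d. w0 l *\<^sub>R (P *v (H l *v d)))) (at x0)"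
    if l: "l \<in> J" for l
  proof (rule bil_deriv_zero[OF bounded_bilinear_scaleR w_lim0[OF l]])
    show "((\<lambda>x. P *v a l x) has_derivative (\<lambda>d. P *v (H l *v d))) (at x0)"
      by (rule bounded_linear.has_derivative[OF matrix_vector_mul_bounded_linear a_der[OF l]])
    show "P *v a l x0 = 0" by (rule Pa[OF l])
  qed
  have "((\<lambda>x. - (P *v df x) - (\<Sum>l\<in>J. w l x *\<^sub>R (P *v a l x))) has_derivative
   (\<lambda>d. - (P *v (Hf *v d)) - (\<Sum>l\<in>J. w0 l *\<^sub>R (P *v (H l *v d))))) (at x0)"
    by (intro has_derivative_diff has_derivative_minus has_derivative_sum t
        bounded_linear.has_derivative[OF matrix_vector_mul_bounded_linear df_der])
  then show ?thesis by (simp only: Pxi_eq)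
qed

lemma ev_eq2: "\<forall>\<^sub>F x in nhds x0. \<forall>l\<in>J. a l x \<bullet> xi x = - \<alpha> * c l x"
  using ev_solve by (rule eventually_mono) (use eq2_at in blast)

lemma Txi_der: "((\<lambda>x. T (xi x)) has_derivative
   (\<lambda>d. (\<Sum>l\<in>J. (- \<alpha> * (a l x0 \<bullet> d)) *\<^sub>R a l x0))) (at x0)"
proof -
  have t: "((\<lambda>x. xi x \<bullet> (a l x - a l x0)) has_derivative (\<lambda>d. 0 \<bullet> (H l *v d))) (at x0)"
    if l: "l \<in> J" for l
  proof (rule bil_deriv_zero[OF bounded_bilinear_inner xi_lim])
    show "((\<lambda>x. a l x - a l x0) has_derivative (\<lambda>d. H l *v d)) (at x0)"
      using has_derivative_diff[OF a_der[OF l] has_derivative_const] by simp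
  qed simp
  have "((\<lambda>x. (\<Sum>l\<in>J. (- \<alpha> * c l x - xi x \<bullet> (a l x - a l x0)) *\<^sub>R a l x0)) has_derivative
     (\<lambda>d. (\<Sum>l\<in>J. (- \<alpha> * (a l x0 \<bullet> d) - 0 \<bullet> (H l *v d)) *\<^sub>R a l x0))) (at x0)"
    by (intro has_derivative_sum has_derivative_scaleR_left has_derivative_diff has_derivative_mult_right
        c_der t) auto
  then have D: "((\<lambda>x. (\<Sum>l\<in>J. (- \<alpha> * c l x - xi x \<bullet> (a l x - a l x0)) *\<^sub>R a l x0)) has_derivative
     (\<lambda>d. (\<Sum>l\<in>J. (- \<alpha> * (a l x0 \<bullet> d)) *\<^sub>R a l x0))) (at x0)" by simp
  show ?thesis
  proof (rule der_ev[OF D])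
    show "\<forall>\<^sub>F x in nhds x0. (\<Sum>l\<in>J. (- \<alpha> * c l x - xi x \<bullet> (a l x - a l x0)) *\<^sub>R a l x0) = T (xi x)"
    proof (rule eventually_mono[OF ev_eq2])
      fix x assume e: "\<forall>l\<in>J. a l x \<bullet> xi x = - \<alpha> * c l x"
      show "(\<Sum>l\<in>J. (- \<alpha> * c l x - xi x \<bullet> (a l x - a l x0)) *\<^sub>R a l x0) = T (xi x)"
        unfolding T_def
      proof (rule sum.cong[OF refl])
        fix l assume "l \<in> J"
        then have e1: "a l x \<bullet> xi x = - \<alpha> * c l x" using e by blast
        have h: "xi x \<bullet> (a l x - a l x0) = a l x \<bullet> xi x - a l x0 \<bullet> xi x"
          by (simp add: inner_commute[of "xi x"] inner_diff_left)
        have "- \<alpha> * c l x - xi x \<bullet> (a l x - a l x0) = a l x0 \<bullet> xi x"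
          unfolding h e1 by simp
        then show "(- \<alpha> * c l x - xi x \<bullet> (a l x - a l x0)) *\<^sub>R a l x0 = (a l x0 \<bullet> xi x) *\<^sub>R a l x0"
          by simp
      qed
    qed
  qed
qed

lemma TP0: "T (P *v z) = 0"
  by (simp add: T_def aP)

lemma inj_TP: "inj (\<lambda>z. T z + P *v z)"
proof -
  have lin: "linear (\<lambda>z. T z + P *v z)" by (intro linear_compose_add linear_T linP)
  have "z = 0" if "T z + P *v z = 0" for z
  proof -
    have s: "(\<Sum>l\<in>J. (a l x0 \<bullet> z) *\<^sub>R a l x0) + P *v z = 0" using that by (simp add: T_def)
    have "z \<in> KK" using sepa(2)[OF s] by (simp add: KK_def)
    then show "z = 0" using P_fix sepa(1)[OF s] by simp
  qed
  then show ?thesis by (subst linear_inj_iff_eq_0[OF lin]) blast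
qed

definition "ginv = (SOME g. linear g \<and> g \<circ> (\<lambda>z. T z + P *v z) = id)"

lemma ginv: "linear ginv" "ginv (T z + P *v z) = z"
proof -
  have lin: "linear (\<lambda>z. T z + P *v z)" by (intro linear_compose_add linear_T linP)
  have "\<exists>g. linear g \<and> g \<circ> (\<lambda>z. T z + P *v z) = id"
    by (rule linear_injective_left_inverse[OF lin inj_TP])
  from someI_ex[OF this] have "linear ginv" "ginv \<circ> (\<lambda>z. T z + P *v z) = id" unfolding ginv_def by auto
  then show "linear ginv" "ginv (T z + P *v z) = z" by (auto simp: fun_eq_iff)
qed

lemma IP_ginv: "v - P *v v = ginv (T v)"
proof -
  have "T (v - P *v v) + P *v (v - P *v v) = T v"
    by (simp add: linear_diff[OF linear_T] linear_diff[OF linP] TP0 PP)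
  then show ?thesis using ginv(2)[of "v - P *v v"] by simp
qed

lemma T_scale: "(\<Sum>l\<in>J. (- \<alpha> * (a l x0 \<bullet> d)) *\<^sub>R a l x0) = (- \<alpha>) *\<^sub>R T d"
  by (simp add: T_def scaleR_sum_right)

lemma IPxi_der: "((\<lambda>x. xi x - P *v xi x) has_derivative (\<lambda>d. (- \<alpha>) *\<^sub>R (d - P *v d))) (at x0)"
proof -
  have bl: "bounded_linear ginv" using ginv(1) by (simp add: linear_conv_bounded_linear)
  have e: "(\<lambda>d. (\<Sum>l\<in>J. (- \<alpha> * (a l x0 \<bullet> d)) *\<^sub>R a l x0)) = (\<lambda>d. (- \<alpha>) *\<^sub>R T d)"
    using T_scale by auto
  have "((\<lambda>x. ginv (T (xi x))) has_derivative (\<lambda>d. ginv ((- \<alpha>) *\<^sub>R T d))) (at x0)"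
    using bounded_linear.has_derivative[OF bl Txi_der[unfolded e]] .
  moreover have "(\<lambda>d. ginv ((- \<alpha>) *\<^sub>R T d)) = (\<lambda>d. (- \<alpha>) *\<^sub>R (d - P *v d))"
    by (simp add: linear_scale[OF ginv(1)] linear_neg[OF ginv(1)] IP_ginv)
  ultimately show ?thesis by (simp add: IP_ginv)
qed

lemma xi_der: "(xi has_derivative
   (\<lambda>d. (- (P *v (Hf *v d)) - (\<Sum>l\<in>J. w0 l *\<^sub>R (P *v (H l *v d)))) + (- \<alpha>) *\<^sub>R (d - P *v d))) (at x0)"
proof -
  have "((\<lambda>x. P *v xi x + (xi x - P *v xi x)) has_derivative
   (\<lambda>d. (- (P *v (Hf *v d)) - (\<Sum>l\<in>J. w0 l *\<^sub>R (P *v (H l *v d)))) + (- \<alpha>) *\<^sub>R (d - P *v d))) (at x0)"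
    by (rule has_derivative_add[OF Pxi_der IPxi_der])
  then show ?thesis by simp
qed

end

lemma grad_unique_vec:
  fixes v w :: "real^'n"
  assumes "(\<lambda>d. v \<bullet> d) = (\<lambda>d. w \<bullet> d)" shows "v = w"
proof -
  have "v \<bullet> (v - w) = w \<bullet> (v - w)" using assms by metis
  then have "(v - w) \<bullet> (v - w) = 0" by (simp add: inner_diff_left)
  then show ?thesis by simp
qed

lemma c2_facts:
  fixes F :: "real^'n \<Rightarrow> real"
  assumes "twice_cont_diff F"
  shows "(F has_derivative (\<lambda>d. grad F x \<bullet> d)) (at x)"
    and "(grad F has_derivative (\<lambda>d. hess F x *v d)) (at x)"
proof -
  obtain Df D2f where D1: "\<And>x. (F has_derivative (\<lambda>d. Df x \<bullet> d)) (at x)"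
    and D2: "\<And>x. (Df has_derivative (\<lambda>d. D2f x *v d)) (at x)"
    using assms unfolding twice_cont_diff_def by blast
  have g: "grad F y = Df y" for y
    unfolding grad_def
  proof (rule the_equality)
    show "(F has_derivative (\<lambda>d. Df y \<bullet> d)) (at y)" by (rule D1)
    fix v assume "(F has_derivative (\<lambda>d. v \<bullet> d)) (at y)"
    from has_derivative_unique[OF this D1] show "v = Df y" by (rule grad_unique_vec)
  qed
  then have gg: "grad F = Df" by auto
  have hh: "hess F y = D2f y" for y
    unfolding hess_def gg
  proof (rule the_equality)
    show "(Df has_derivative (\<lambda>d. D2f y *v d)) (at y)" by (rule D2)
    fix M assume "(Df has_derivative (\<lambda>d. M *v d)) (at y)"
    from has_derivative_unique[OF this D2] show "M = D2f y" by (simp add: matrix_eq fun_eq_iff)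
  qed
  show "(F has_derivative (\<lambda>d. grad F x \<bullet> d)) (at x)" using D1 g by simp
  show "(grad F has_derivative (\<lambda>d. hess F x *v d)) (at x)" using D2 gg hh by simp
qed

lemma sum_J:
  assumes "finite I" "finite K"
  shows "(\<Sum>l\<in>Inl ` I \<union> Inr ` K. F l) = (\<Sum>i\<in>I. F (Inl i)) + (\<Sum>j\<in>K. F (Inr j))"
  using assms by (subst sum.union_disjoint) (auto simp: sum.reindex)

lemma matrix_sum_vec:
  fixes M :: "'i \<Rightarrow> real^'n^'m"
  shows "(\<Sum>i\<in>S. M i) *v d = (\<Sum>i\<in>S. M i *v d)"
proof (cases "finite S")
  case True then show ?thesis
    by (induction S rule: finite_induct) (auto simp: matrix_vector_mult_add_rdistrib)
next
  case False then show ?thesis by (simp add: matrix_vector_mult_0)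
qed

lemma norm_add_sq:
  fixes A B :: "'a::real_inner"
  shows "(norm (A + B))\<^sup>2 = (norm A)\<^sup>2 + 2 * (A \<bullet> B) + (norm B)\<^sup>2"
  by (simp only: power2_norm_eq_inner inner_add_left inner_add_right inner_commute[of B A])

lemma G_eq:
  fixes f :: "real^'n \<Rightarrow> real" and g h :: "nat \<Rightarrow> real^'n \<Rightarrow> real"
  assumes feas: "\<xi> \<in> dir_feasible \<alpha> g m h k x"
    and mult: "\<xi> + grad f x + (\<Sum>i\<in>I. lam i *\<^sub>R grad (g i) x) + (\<Sum>j<k. mu j *\<^sub>R grad (h j) x) = 0"
    and I: "I \<subseteq> {..<m}" "finite I"
    and lam: "\<And>i. i \<in> I \<Longrightarrow> lam i \<ge> 0 \<and> grad (g i) x \<bullet> \<xi> = - \<alpha> * g i x"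
  shows "G_alpha \<alpha> f g m h k x = \<xi>"
proof -
  let ?F = "dir_feasible \<alpha> g m h k x"
  let ?q = "grad f x"
  have key: "(norm (\<eta> + ?q))\<^sup>2 \<ge> (norm (\<xi> + ?q))\<^sup>2 + (norm (\<eta> - \<xi>))\<^sup>2" if eta: "\<eta> \<in> ?F" for \<eta>
  proof -
    have sq: "\<xi> + ?q = - (\<Sum>i\<in>I. lam i *\<^sub>R grad (g i) x) - (\<Sum>j<k. mu j *\<^sub>R grad (h j) x)"
      using mult by (simp add: algebra_simps eq_neg_iff_add_eq_0)
    have t1: "grad (g i) x \<bullet> (\<eta> - \<xi>) \<le> 0" if "i \<in> I" for i
      using lam[OF that] eta I that unfolding dir_feasible_def by (auto simp: inner_diff_right)
    have t2: "grad (h j) x \<bullet> (\<eta> - \<xi>) = 0" if "j < k" for j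
      using eta feas that unfolding dir_feasible_def by (auto simp: inner_diff_right)
    have e: "(\<xi> + ?q) \<bullet> (\<eta> - \<xi>) = - (\<Sum>i\<in>I. lam i * (grad (g i) x \<bullet> (\<eta> - \<xi>)))
        - (\<Sum>j<k. mu j * (grad (h j) x \<bullet> (\<eta> - \<xi>)))"
      unfolding sq by (simp add: inner_diff_left inner_sum_left)
    have e2: "(\<Sum>j<k. mu j * (grad (h j) x \<bullet> (\<eta> - \<xi>))) = 0" using t2 by simp
    have e3: "(\<Sum>i\<in>I. lam i * (grad (g i) x \<bullet> (\<eta> - \<xi>))) \<le> 0"
      using t1 lam by (intro sum_nonpos) (simp add: mult_nonneg_nonpos)
    have ip: "(\<xi> + ?q) \<bullet> (\<eta> - \<xi>) \<ge> 0" using e e2 e3 by linarith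
    have "\<eta> + ?q = (\<xi> + ?q) + (\<eta> - \<xi>)" by simp
    then have "(norm (\<eta> + ?q))\<^sup>2 = (norm ((\<xi> + ?q) + (\<eta> - \<xi>)))\<^sup>2" by (simp only:)
    also have "\<dots> = (norm (\<xi> + ?q))\<^sup>2 + 2 * ((\<xi> + ?q) \<bullet> (\<eta> - \<xi>)) + (norm (\<eta> - \<xi>))\<^sup>2"
      by (rule norm_add_sq)
    finally show ?thesis using ip by simp
  qed
  show ?thesis unfolding G_alpha_def
  proof (rule the_equality)
    show "\<xi> \<in> ?F \<and> (\<forall>\<eta>\<in>?F. 1/2 * (norm (\<xi> + ?q))\<^sup>2 \<le> 1/2 * (norm (\<eta> + ?q))\<^sup>2)"
    proof (intro conjI ballI feas)
      fix \<eta> assume e: "\<eta> \<in> ?F"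
      show "1/2 * (norm (\<xi> + ?q))\<^sup>2 \<le> 1/2 * (norm (\<eta> + ?q))\<^sup>2"
        using key[OF e] zero_le_power2[of "norm (\<eta> - \<xi>)"] by linarith
    qed
  next
    fix \<zeta> assume z: "\<zeta> \<in> ?F \<and> (\<forall>\<eta>\<in>?F. 1/2 * (norm (\<zeta> + ?q))\<^sup>2 \<le> 1/2 * (norm (\<eta> + ?q))\<^sup>2)"
    then have z1: "1/2 * (norm (\<zeta> + ?q))\<^sup>2 \<le> 1/2 * (norm (\<xi> + ?q))\<^sup>2" using feas by blast
    have z2: "(norm (\<zeta> + ?q))\<^sup>2 \<ge> (norm (\<xi> + ?q))\<^sup>2 + (norm (\<zeta> - \<xi>))\<^sup>2" using key z by blast
    from z1 z2 have "(norm (\<zeta> - \<xi>))\<^sup>2 \<le> 0" by linarith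
    then show "\<zeta> = \<xi>" by simp
  qed
qed


theorem mainTheorem13:
  fixes f :: "real^'n \<Rightarrow> real"
    and g h :: "nat \<Rightarrow> real^'n \<Rightarrow> real"
    and m k :: nat
    and \<alpha> :: real
    and xs :: "real^'n"
    and u v :: "nat \<Rightarrow> real"
    and P :: "real^'n^'n"
  assumes alpha_pos: "\<alpha> > 0"
    and f_C2: "twice_cont_diff f"
    and g_C2: "\<forall>i<m. twice_cont_diff (g i)"
    and h_C2: "\<forall>j<k. twice_cont_diff (h j)"
    and KKT: "KKT_triple f g m h k xs u v"
    and licq: "LICQ g m h k xs"
    and strict_compl: "\<forall>i\<in>active g m xs. u i > 0"
    and SOSC: "\<forall>z\<in>crit_space g m h k xs. z \<noteq> 0 \<longrightarrow>
                 z \<bullet> ((hess f xs + (\<Sum>i<m. u i *\<^sub>R hess (g i) xs)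
                           + (\<Sum>j<k. v j *\<^sub>R hess (h j) xs)) *v z) > 0"
    and P_def: "is_orth_proj_matrix P (crit_space g m h k xs)"
  shows "(G_alpha \<alpha> f g m h k has_derivative
            (\<lambda>d. (- (P ** (hess f xs + (\<Sum>i<m. u i *\<^sub>R hess (g i) xs)
                              + (\<Sum>j<k. v j *\<^sub>R hess (h j) xs)))
                   - \<alpha> *\<^sub>R (mat 1 - P)) *v d)) (at xs)"
proof -
  define I0 where "I0 = active g m xs"
  have I0m: "I0 \<subseteq> {..<m}" and finI0: "finite I0" unfolding I0_def active_def
    by (auto intro: finite_subset[of _ "{..<m}"])
  have I0g: "i \<in> I0 \<longleftrightarrow> i < m \<and> g i xs = 0" for i unfolding I0_def active_def by auto
  define J where "J = Inl ` I0 \<union> Inr ` {..<k}"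
  define a where "a = case_sum (\<lambda>i. grad (g i)) (\<lambda>j. grad (h j))"
  define c where "c = case_sum (\<lambda>i. g i) (\<lambda>j. h j)"
  define H where "H = case_sum (\<lambda>i. hess (g i) xs) (\<lambda>j. hess (h j) xs)"
  define w0 where "w0 = case_sum u v"
  have sJ: "(\<Sum>l\<in>J. F l) = (\<Sum>i\<in>I0. F (Inl i)) + (\<Sum>j<k. F (Inr j))" for F :: "nat + nat \<Rightarrow> 'z::comm_monoid_add"
    unfolding J_def by (rule sum_J[OF finI0]) simp
  from KKT have stat: "grad f xs + (\<Sum>i<m. u i *\<^sub>R grad (g i) xs) + (\<Sum>j<k. v j *\<^sub>R grad (h j) xs) = 0"
    and gle: "\<forall>i<m. g i xs \<le> 0" and heq: "\<forall>j<k. h j xs = 0" and uge: "\<forall>i<m. u i \<ge> 0"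
    and compl: "(\<Sum>i<m. u i * g i xs) = 0"
    unfolding KKT_triple_def by auto
  have uz: "u i = 0" if "i < m" "i \<notin> I0" for i
  proof -
    have "(\<Sum>i<m. - (u i * g i xs)) = 0" using compl by (simp add: sum_negf)
    moreover have "\<forall>i\<in>{..<m}. - (u i * g i xs) \<ge> 0" using gle uge by (simp add: mult_nonneg_nonpos)
    ultimately have "\<forall>i\<in>{..<m}. - (u i * g i xs) = 0"
      using sum_nonneg_eq_0_iff[OF finite_lessThan, of m "\<lambda>i. - (u i * g i xs)"] by blast
    then have "u i * g i xs = 0" using that by simp
    moreover have "g i xs \<noteq> 0" using that I0g by auto
    ultimately show ?thesis by simp
  qed
  have sumI0: "(\<Sum>i<m. u i *\<^sub>R F i) = (\<Sum>i\<in>I0. u i *\<^sub>R F i)" for F :: "nat \<Rightarrow> 'z::real_vector"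
    by (rule sum.mono_neutral_right) (use I0m uz in auto)
  interpret core J a c "grad f" xs w0 P H "hess f xs" \<alpha>
  proof
    show "finite J" unfolding J_def using finI0 by simp
  next
    fix l assume "l \<in> J"
    then obtain i j where "(l = Inl i \<and> i \<in> I0) \<or> (l = Inr j \<and> j < k)" unfolding J_def by auto
    then show "(c l has_derivative (\<lambda>d. a l xs \<bullet> d)) (at xs)"
      "c l xs = 0" "(a l has_derivative (\<lambda>d. H l *v d)) (at xs)"
      using g_C2 h_C2 I0g heq I0m unfolding a_def c_def H_def by (auto intro!: c2_facts)
  next
    show "(grad f has_derivative (\<lambda>d. hess f xs *v d)) (at xs)" by (rule c2_facts(2)[OF f_C2])
  next
    fix t and l assume t: "(\<Sum>l\<in>J. t l *\<^sub>R a l xs) = 0" and l: "l \<in> J"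
    have "(\<Sum>i\<in>active g m xs. (t \<circ> Inl) i *\<^sub>R grad (g i) xs) + (\<Sum>j<k. (t \<circ> Inr) j *\<^sub>R grad (h j) xs) = 0"
      using t unfolding sJ a_def I0_def by simp
    with licq have "(\<forall>i\<in>active g m xs. (t \<circ> Inl) i = 0) \<and> (\<forall>j<k. (t \<circ> Inr) j = 0)"
      unfolding LICQ_def by blast
    then show "t l = 0" using l unfolding J_def I0_def by auto
  next
    show "grad f xs + (\<Sum>l\<in>J. w0 l *\<^sub>R a l xs) = 0"
      using stat unfolding sJ w0_def a_def sumI0 by (simp add: add.assoc)
  next
    have "crit_space g m h k xs = {z. \<forall>l\<in>J. a l xs \<bullet> z = 0}"
      unfolding crit_space_def J_def a_def I0_def by (auto simp: ball_Un)
    then show "is_orth_proj_matrix P {z. \<forall>l\<in>J. a l xs \<bullet> z = 0}" using P_def by simp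
  qed
  have E1: "\<forall>\<^sub>F x in nhds xs. \<forall>l\<in>J. a l x \<bullet> xi x = - \<alpha> * c l x" by (rule ev_eq2)
  have E2: "\<forall>\<^sub>F x in nhds xs. \<forall>i\<in>I0. w (Inl i) x > 0"
  proof (rule eventually_ball_finite[OF finI0], rule ballI)
    fix i assume i: "i \<in> I0"
    then have l: "Inl i \<in> J" unfolding J_def by auto
    have up: "u i > 0" using strict_compl i unfolding I0_def by auto
    have "\<forall>\<^sub>F x in at xs. w (Inl i) x > 0"
      using order_tendstoD(1)[OF w_lim0[OF l]] up by (simp add: w0_def)
    moreover have "w (Inl i) xs > 0" using w0_xi0(1)[OF l] up by (simp add: w0_def)
    ultimately show "\<forall>\<^sub>F x in nhds xs. w (Inl i) x > 0" by (rule ev_nhds)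
  qed
  have E3: "\<forall>\<^sub>F x in nhds xs. \<forall>i\<in>{..<m} - I0. grad (g i) x \<bullet> xi x \<le> - \<alpha> * g i x"
  proof (rule eventually_ball_finite, simp, rule ballI)
    fix i assume i: "i \<in> {..<m} - I0"
    then have neg: "g i xs < 0" using gle I0g by force
    have C2: "twice_cont_diff (g i)" using g_C2 i by auto
    have gc: "(grad (g i) \<longlongrightarrow> grad (g i) xs) (at xs)" by (rule cont_of_der[OF c2_facts(2)[OF C2]])
    have gc2: "(g i \<longlongrightarrow> g i xs) (at xs)" by (rule cont_of_der[OF c2_facts(1)[OF C2]])
    have lim: "((\<lambda>x. grad (g i) x \<bullet> xi x + \<alpha> * g i x) \<longlongrightarrow> grad (g i) xs \<bullet> 0 + \<alpha> * g i xs) (at xs)"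
      by (intro tendsto_intros gc gc2 xi_lim)
    have ng: "grad (g i) xs \<bullet> 0 + \<alpha> * g i xs < 0" using neg alpha_pos by (simp add: mult_pos_neg)
    have "\<forall>\<^sub>F x in at xs. grad (g i) x \<bullet> xi x + \<alpha> * g i x < 0"
      by (rule order_tendstoD(2)[OF lim ng])
    moreover have "grad (g i) xs \<bullet> xi xs + \<alpha> * g i xs < 0" using xi0 neg alpha_pos by (simp add: mult_pos_neg)
    ultimately have "\<forall>\<^sub>F x in nhds xs. grad (g i) x \<bullet> xi x + \<alpha> * g i x < 0" by (rule ev_nhds)
    then show "\<forall>\<^sub>F x in nhds xs. grad (g i) x \<bullet> xi x \<le> - \<alpha> * g i x" by (rule eventually_mono) simp
  qed
  have EG: "\<forall>\<^sub>F x in nhds xs. xi x = G_alpha \<alpha> f g m h k x"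
  proof (rule eventually_mono[OF eventually_conj[OF E1 eventually_conj[OF E2 E3]]])
    fix x assume A: "(\<forall>l\<in>J. a l x \<bullet> xi x = - \<alpha> * c l x) \<and> (\<forall>i\<in>I0. w (Inl i) x > 0) \<and>
        (\<forall>i\<in>{..<m} - I0. grad (g i) x \<bullet> xi x \<le> - \<alpha> * g i x)"
    have Ag: "grad (g i) x \<bullet> xi x = - \<alpha> * g i x" if "i \<in> I0" for i
    proof -
      have "Inl i \<in> J" using that unfolding J_def by auto
      from A[THEN conjunct1, rule_format, OF this] show ?thesis by (simp add: a_def c_def)
    qed
    have Ah: "grad (h j) x \<bullet> xi x = - \<alpha> * h j x" if "j < k" for j
    proof -
      have "Inr j \<in> J" using that unfolding J_def by auto
      from A[THEN conjunct1, rule_format, OF this] show ?thesis by (simp add: a_def c_def)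
    qed
    have feas: "xi x \<in> dir_feasible \<alpha> g m h k x"
      unfolding dir_feasible_def using A Ag Ah by (auto simp: le_less)
    have mult: "xi x + grad f x + (\<Sum>i\<in>I0. w (Inl i) x *\<^sub>R grad (g i) x) + (\<Sum>j<k. w (Inr j) x *\<^sub>R grad (h j) x) = 0"
    proof -
      have "xi x = - grad f x - (\<Sum>l\<in>J. w l x *\<^sub>R a l x)" by (simp add: xi_def)
      also have "(\<Sum>l\<in>J. w l x *\<^sub>R a l x) = (\<Sum>i\<in>I0. w (Inl i) x *\<^sub>R grad (g i) x) + (\<Sum>j<k. w (Inr j) x *\<^sub>R grad (h j) x)"
        unfolding sJ a_def by simp
      finally show ?thesis by (simp add: algebra_simps)
    qed
    show "xi x = G_alpha \<alpha> f g m h k x"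
      by (rule G_eq[OF feas mult I0m finI0, symmetric]) (use A Ag in auto)
  qed
  have D: "(G_alpha \<alpha> f g m h k has_derivative
   (\<lambda>d. (- (P *v (hess f xs *v d)) - (\<Sum>l\<in>J. w0 l *\<^sub>R (P *v (H l *v d)))) + (- \<alpha>) *\<^sub>R (d - P *v d))) (at xs)"
    by (rule der_ev[OF xi_der EG])
  have eqD: "(- (P ** (hess f xs + (\<Sum>i<m. u i *\<^sub>R hess (g i) xs)
                              + (\<Sum>j<k. v j *\<^sub>R hess (h j) xs)))
                   - \<alpha> *\<^sub>R (mat 1 - P)) *v d
     = (- (P *v (hess f xs *v d)) - (\<Sum>l\<in>J. w0 l *\<^sub>R (P *v (H l *v d)))) + (- \<alpha>) *\<^sub>R (d - P *v d)" for d
  proof -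
    have s1: "(\<Sum>l\<in>J. w0 l *\<^sub>R (P *v (H l *v d))) = P *v ((\<Sum>i<m. u i *\<^sub>R hess (g i) xs) *v d + (\<Sum>j<k. v j *\<^sub>R hess (h j) xs) *v d)"
      unfolding sJ w0_def H_def matrix_sum_vec sumI0
      by (simp add: matrix_vector_right_distrib linear_sum[OF linP] matrix_scaleR_vector_ac
          scaleR_matrix_vector_assoc[symmetric])
    show ?thesis
      unfolding s1
      by (simp add: matrix_vector_mult_diff_rdistrib matrix_vector_mult_add_rdistrib matrix_vector_right_distrib
          matrix_vector_mul_assoc[symmetric] scaleR_matrix_vector_assoc[symmetric] matrix_vector_mult_diff_distrib
          algebra_simps)
  qed
  show ?thesis using D unfolding eqD .
qed

end
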